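(* Let $n\ge 1$ and let $P$ be a probability distribution on $\mathbb{R}^n \times \mathbb{R}$ of a pair $(\mathbf{x},y)$ with $\mathbb{E}|y|<\infty$. For a set of feature indices $S\subseteq\{1,\dots,n\}$ and a fixed width parameter $\gamma>0$, let $\kappa_S$ be the Gaussian kernel on the features in $S$, $$\kappa_S(\mathbf{x},\mathbf{x}') = \exp\Big(-\gamma \sum_{j\in S} (x_j - x'_j)^2\Big).$$ Let $S\subseteq\{1,\dots,n\}$ and let $i\notin S$ be an irrelevant feature. Then, with $(\mathbf{x},y)$ and $(\mathbf{x}',y')$ drawn independently from $P$, $$\mathbb{E}_{(\mathbf{x},y) \sim P, (\mathbf{x}', y')\sim P}\big[y y' \kappa_{S\cup\{i\}}(\mathbf{x},\mathbf{x}')\big] \leq \mathbb{E}_{(\mathbf{x},y) \sim P, (\mathbf{x}', y')\sim P}\big[y y' \kappa_{S}(\mathbf{x},\mathbf{x}')\big].$$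
   Context: A feature $i$ (the coordinate $x_i$ of $\mathbf{x}$) is called irrelevant if its value $x_i$ is statistically independent of the label $y$ and of the other features $(x_j)_{j\ne i}$, i.e. $x_i$ is independent of the random vector $\big(y,(x_j)_{j\neq i}\big)$. The same width $\gamma$ is used for all kernels $\kappa_S$. *)

theory Defs
  imports "HOL-Probability.Probability"
begin

definition gauss_kernel :: "real \<Rightarrow> 'n::finite set \<Rightarrow> real^'n \<Rightarrow> real^'n \<Rightarrow> real" where
  "gauss_kernel \<gamma> S x x' = exp (- \<gamma> * (\<Sum>j\<in>S. (x$j - x'$j)^2))"

text \<open>Feature i is irrelevant under P: x_i is independent of (y, (x_j)_{j ~= i}).
  The other features are encoded as the vector with coordinate i zeroed out.\<close>
definition irrelevant_feature :: "((real^'n::finite) \<times> real) measure \<Rightarrow> 'n \<Rightarrow> bool" where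
  "irrelevant_feature P i \<longleftrightarrow>
     (\<forall>A \<in> sets (borel :: real measure). \<forall>B \<in> sets (borel :: (real \<times> (real^'n)) measure).
        measure P {\<omega> \<in> space P. (case \<omega> of (x, y) \<Rightarrow> x $ i) \<in> A
                                \<and> (case \<omega> of (x, y) \<Rightarrow> (y, \<chi> j. if j = i then 0 else x $ j)) \<in> B}
        = measure P {\<omega> \<in> space P. (case \<omega> of (x, y) \<Rightarrow> x $ i) \<in> A}
          * measure P {\<omega> \<in> space P. (case \<omega> of (x, y) \<Rightarrow> (y, \<chi> j. if j = i then 0 else x $ j)) \<in> B})"

end

theory Submission
  imports Defs
begin

lemma pair_mult:
  fixes f g :: "_ \<Rightarrow> real"
  assumes "sigma_finite_measure M1" "sigma_finite_measure M2" "integrable M1 f" "integrable M2 g"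
  shows "integrable (M1 \<Otimes>\<^sub>M M2) (\<lambda>(x,y). f x * g y)"
    and "(\<integral>(x,y). f x * g y \<partial>(M1 \<Otimes>\<^sub>M M2)) = integral\<^sup>L M1 f * integral\<^sup>L M2 g"
proof -
  interpret pair_sigma_finite M1 M2 using assms(1,2) by (simp add: pair_sigma_finite_def)
  have [measurable]: "f \<in> borel_measurable M1" "g \<in> borel_measurable M2" using assms by auto
  show I: "integrable (M1 \<Otimes>\<^sub>M M2) (\<lambda>(x,y). f x * g y)"
  proof (rule Fubini_integrable)
    have "integrable M1 (\<lambda>x. \<bar>f x\<bar> * (\<integral>y. \<bar>g y\<bar> \<partial>M2))"
      using assms(3) by (intro integrable_mult_left integrable_abs)
    then show "integrable M1 (\<lambda>x. \<integral>y. norm ((\<lambda>(x,y). f x * g y) (x, y)) \<partial>M2)"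
      by (simp add: abs_mult)
    show "AE x in M1. integrable M2 (\<lambda>y. (\<lambda>(x,y). f x * g y) (x, y))"
      using assms(4) by (auto intro!: integrable_mult_right)
  qed measurable
  show "(\<integral>(x,y). f x * g y \<partial>(M1 \<Otimes>\<^sub>M M2)) = integral\<^sup>L M1 f * integral\<^sup>L M2 g"
    using integral_fst'[OF I, symmetric] by simp
qed

lemma pos_kernel:
  fixes Y :: "'a \<Rightarrow> real" and h :: "'a \<times> 'b \<Rightarrow> real"
  assumes P: "prob_space P" and M: "sigma_finite_measure M" and Y: "integrable P Y"
    and h[measurable]: "h \<in> borel_measurable (P \<Otimes>\<^sub>M M)"
    and h0: "\<And>\<omega> w. 0 \<le> h (\<omega>,w)" and h1: "\<And>\<omega> w. h (\<omega>,w) \<le> 1"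
    and hi: "\<And>a b. a\<in>space P \<Longrightarrow> b\<in>space P \<Longrightarrow> integrable M (\<lambda>w. h(a,w)*h(b,w))"
    and hb: "\<And>a b. a\<in>space P \<Longrightarrow> b\<in>space P \<Longrightarrow> (\<integral>w. h(a,w)*h(b,w) \<partial>M) \<le> C"
  shows "0 \<le> (\<integral>(a,b). Y a * Y b * (\<integral>w. h(a,w)*h(b,w) \<partial>M) \<partial>(P \<Otimes>\<^sub>M P))"
proof -
  interpret P: prob_space P by fact
  interpret M: sigma_finite_measure M by fact
  interpret PP: pair_sigma_finite P P by (simp add: pair_sigma_finite_def P.sigma_finite_measure_axioms)
  interpret PPs: sigma_finite_measure "P \<Otimes>\<^sub>M P" by (rule PP.sigma_finite_measure_axioms)
  interpret Q: pair_sigma_finite "P \<Otimes>\<^sub>M P" M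
    by (simp add: pair_sigma_finite_def PP.sigma_finite_measure_axioms M.sigma_finite_measure_axioms)
  have [measurable]: "Y \<in> borel_measurable P" using Y by auto
  define \<Phi> where "\<Phi> = (\<lambda>(q::'a\<times>'a, w). Y (fst q) * Y (snd q) * (h (fst q, w) * h (snd q, w)))"
  have \<Phi>m[measurable]: "\<Phi> \<in> borel_measurable ((P \<Otimes>\<^sub>M P) \<Otimes>\<^sub>M M)"
    unfolding \<Phi>_def by measurable
  define K where "K = (\<lambda>q::'a\<times>'a. \<integral>w. h(fst q,w)*h(snd q,w) \<partial>M)"
  have Km[measurable]: "K \<in> borel_measurable (P \<Otimes>\<^sub>M P)"
    unfolding K_def by measurable
  have K0: "0 \<le> K q" for q unfolding K_def by (rule integral_nonneg_AE) (simp add: h0)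
  have YY: "integrable (P \<Otimes>\<^sub>M P) (\<lambda>(a,b). Y a * Y b)"
    by (rule pair_mult(1)[OF _ _ Y Y]) (simp_all add: P.sigma_finite_measure_axioms)
  have intPhi: "integrable ((P \<Otimes>\<^sub>M P) \<Otimes>\<^sub>M M) \<Phi>"
  proof (rule Q.Fubini_integrable[OF \<Phi>m])
    have "integrable (P \<Otimes>\<^sub>M P) (\<lambda>q. \<bar>Y (fst q) * Y (snd q)\<bar> * K q)"
    proof (rule Bochner_Integration.integrable_bound)
      show "integrable (P \<Otimes>\<^sub>M P) (\<lambda>q. max C 0 * \<bar>(case q of (a,b) \<Rightarrow> Y a * Y b)\<bar>)"
        using YY by (intro integrable_mult_right integrable_abs)
      show "AE q in P \<Otimes>\<^sub>M P. norm (\<bar>Y (fst q) * Y (snd q)\<bar> * K q)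
              \<le> norm (max C 0 * \<bar>(case q of (a,b) \<Rightarrow> Y a * Y b)\<bar>)"
      proof (rule AE_I2)
        fix q assume "q \<in> space (P \<Otimes>\<^sub>M P)"
        then have "K q \<le> C" unfolding K_def using hb by (auto simp: space_pair_measure)
        then show "norm (\<bar>Y (fst q) * Y (snd q)\<bar> * K q)
              \<le> norm (max C 0 * \<bar>(case q of (a,b) \<Rightarrow> Y a * Y b)\<bar>)"
        proof -
          have "\<bar>Y (fst q) * Y (snd q)\<bar> * K q \<le> \<bar>Y (fst q) * Y (snd q)\<bar> * max C 0"
            using \<open>K q \<le> C\<close> by (intro mult_left_mono) auto
          then show ?thesis using K0[of q] by (cases q) (simp add: mult.commute)
        qed
      qed
    qed measurable
    moreover have "(\<integral>w. norm (\<Phi> (q, w)) \<partial>M) = \<bar>Y (fst q) * Y (snd q)\<bar> * K q" for q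
      unfolding \<Phi>_def K_def by (simp add: abs_mult h0)
    ultimately show "integrable (P \<Otimes>\<^sub>M P) (\<lambda>q. \<integral>w. norm (\<Phi> (q, w)) \<partial>M)" by simp
    show "AE q in P \<Otimes>\<^sub>M P. integrable M (\<lambda>w. \<Phi> (q, w))"
      unfolding \<Phi>_def by (rule AE_I2) (auto simp: space_pair_measure intro!: integrable_mult_right hi)
  qed
  have "(\<integral>(a,b). Y a * Y b * (\<integral>w. h(a,w)*h(b,w) \<partial>M) \<partial>(P \<Otimes>\<^sub>M P))
      = (\<integral>q. (\<integral>w. \<Phi> (q,w) \<partial>M) \<partial>(P \<Otimes>\<^sub>M P))"
    unfolding \<Phi>_def by (intro Bochner_Integration.integral_cong) auto
  also have "\<dots> = (\<integral>w. (\<integral>q. \<Phi> (q,w) \<partial>(P \<Otimes>\<^sub>M P)) \<partial>M)"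
    using Q.Fubini_integral[of "\<lambda>q w. \<Phi> (q,w)"] intPhi by simp
  also have "\<dots> \<ge> 0"
  proof (rule integral_nonneg_AE, rule AE_I2)
    fix w assume w: "w \<in> space M"
    have hm: "(\<lambda>a. h (a, w)) \<in> borel_measurable P"
      using w by measurable
    have iY: "integrable P (\<lambda>a. Y a * h (a, w))"
    proof (rule Bochner_Integration.integrable_bound[OF integrable_abs[OF Y]])
      show "(\<lambda>a. Y a * h (a, w)) \<in> borel_measurable P" using hm by measurable
      show "AE x in P. norm (Y x * h (x, w)) \<le> norm \<bar>Y x\<bar>"
        using h0 h1 by (auto simp: abs_mult intro!: mult_left_le)
    qed
    have "(\<integral>q. \<Phi> (q,w) \<partial>(P \<Otimes>\<^sub>M P)) = (\<integral>(a,b). (Y a * h (a, w)) * (Y b * h (b,w)) \<partial>(P \<Otimes>\<^sub>M P))"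
      unfolding \<Phi>_def by (intro Bochner_Integration.integral_cong) (auto simp: ac_simps)
    also have "\<dots> = (\<integral>a. Y a * h (a, w) \<partial>P) * (\<integral>a. Y a * h (a, w) \<partial>P)"
      by (rule pair_mult(2)[OF _ _ iY iY]) (simp_all add: P.sigma_finite_measure_axioms)
    also have "\<dots> \<ge> 0" by simp
    finally show "0 \<le> (\<integral>q. \<Phi> (q,w) \<partial>(P \<Otimes>\<^sub>M P))" .
  qed
  finally show ?thesis .
qed

lemma gauss1d:
  fixes \<gamma> a b :: real
  assumes g: "\<gamma> > 0"
  defines "G \<equiv> sqrt (2 * pi * (sqrt (1/(8*\<gamma>)))\<^sup>2)"
  shows "integrable lborel (\<lambda>w. exp (-2*\<gamma>*(a-w)^2) * exp (-2*\<gamma>*(b-w)^2))"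
    and "(\<integral>w. exp (-2*\<gamma>*(a-w)^2) * exp (-2*\<gamma>*(b-w)^2) \<partial>lborel) = exp (-\<gamma>*(a-b)^2) * G"
proof -
  define \<sigma> where "\<sigma> = sqrt (1/(8*\<gamma>))"
  have s2: "\<sigma>\<^sup>2 = 1/(8*\<gamma>)" unfolding \<sigma>_def using g by simp
  have Gpos: "G > 0" unfolding G_def using g by simp
  have G\<sigma>: "G = sqrt (2 * pi * \<sigma>\<^sup>2)" unfolding G_def \<sigma>_def ..
  have eq: "exp (-2*\<gamma>*(a-w)^2) * exp (-2*\<gamma>*(b-w)^2)
      = (exp (-\<gamma>*(a-b)^2) * G) * normal_density ((a+b)/2) \<sigma> w" for w
  proof -
    have "G * normal_density ((a+b)/2) \<sigma> w = exp (-(w - (a+b)/2)\<^sup>2 / (2 * \<sigma>\<^sup>2))"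
      unfolding normal_density_def G\<sigma> using Gpos G\<sigma> s2 g by auto
    also have "\<dots> = exp (- 4*\<gamma>*(w - (a+b)/2)\<^sup>2)"
      using g by (simp add: s2 field_simps)
    finally have *: "G * normal_density ((a+b)/2) \<sigma> w = exp (- 4*\<gamma>*(w - (a+b)/2)\<^sup>2)" .
    have "exp (-2*\<gamma>*(a-w)^2) * exp (-2*\<gamma>*(b-w)^2) = exp (-\<gamma>*(a-b)^2) * exp (- 4*\<gamma>*(w - (a+b)/2)\<^sup>2)"
      unfolding exp_add[symmetric] by (rule arg_cong[where f=exp]) (simp add: power2_eq_square field_simps)
    then show ?thesis using * by (simp add: ac_simps)
  qed
  show "integrable lborel (\<lambda>w. exp (-2*\<gamma>*(a-w)^2) * exp (-2*\<gamma>*(b-w)^2))"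
  proof -
    have "\<sigma> > 0" unfolding \<sigma>_def using g by simp
    then show ?thesis unfolding eq by (intro integrable_mult_right) simp
  qed
  show "(\<integral>w. exp (-2*\<gamma>*(a-w)^2) * exp (-2*\<gamma>*(b-w)^2) \<partial>lborel) = exp (-\<gamma>*(a-b)^2) * G"
  proof -
    have "\<sigma> > 0" unfolding \<sigma>_def using g by simp
    then show ?thesis unfolding eq by simp
  qed
qed

lemma gauss_kernel_le1:
  assumes "\<gamma> \<ge> 0" shows "gauss_kernel \<gamma> S x x' \<le> 1" and "0 \<le> gauss_kernel \<gamma> S x x'"
proof -
  have "0 \<le> \<gamma> * (\<Sum>j\<in>S. (x$j - x'$j)^2)" using assms by (simp add: sum_nonneg)
  then show "gauss_kernel \<gamma> S x x' \<le> 1" unfolding gauss_kernel_def by simp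
  show "0 \<le> gauss_kernel \<gamma> S x x'" unfolding gauss_kernel_def by simp
qed

lemma A_nonneg:
  fixes P :: "((real^'n::finite) \<times> real) measure" and S :: "'n set"
  assumes P: "prob_space P" and sP: "sets P = sets borel" and Y: "integrable P (\<lambda>(x,y). y)" and g: "\<gamma> > 0"
  shows "0 \<le> (\<integral>((x,y),(x',y')). y*y'*gauss_kernel \<gamma> S x x' \<partial>(P \<Otimes>\<^sub>M P))"
proof -
  define G where "G \<equiv> sqrt (2 * pi * (sqrt (1/(8*\<gamma>)))\<^sup>2)"
  have Gpos: "G > 0" unfolding G_def using g by simp
  define M where "M = PiM S (\<lambda>_. lborel :: real measure)"
  interpret ps: product_sigma_finite "\<lambda>_::'n. lborel::real measure"
    by (simp add: product_sigma_finite_def lborel.sigma_finite_measure_axioms)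
  have fin: "finite S" by simp
  have sfM: "sigma_finite_measure M" unfolding M_def
    by (rule ps.sigma_finite) simp
  define h where "h = (\<lambda>(\<omega>::(real^'n)\<times>real, w::'n\<Rightarrow>real). \<Prod>j\<in>S. exp(-2*\<gamma>*(fst \<omega> $ j - w j)^2))"
  have hm0: "h \<in> borel_measurable (borel \<Otimes>\<^sub>M M)"
  proof -
    have vm[measurable]: "(\<lambda>v::real^'n. v $ j) \<in> borel_measurable borel" for j
      by (intro borel_measurable_continuous_onI continuous_intros)
    have cm: "(\<lambda>x::((real^'n)\<times>real)\<times>('n\<Rightarrow>real). snd x j) \<in> borel_measurable (borel \<Otimes>\<^sub>M M)" if "j \<in> S" for j
    proof -
      have "(\<lambda>x::'n\<Rightarrow>real. x j) \<in> measurable M lborel"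
        unfolding M_def using that by (rule measurable_component_singleton)
      then show ?thesis by (intro measurable_compose[OF measurable_snd]) simp
    qed
    show ?thesis unfolding h_def case_prod_unfold
    proof (intro borel_measurable_prod)
      fix j assume "j \<in> S"
      have vm2: "(\<lambda>\<omega>::(real^'n)\<times>real. fst \<omega> $ j) \<in> borel_measurable borel"
        by (intro borel_measurable_continuous_onI continuous_intros)
      note [measurable] = cm[OF \<open>j \<in> S\<close>] measurable_compose[OF measurable_fst vm2]
      show "(\<lambda>x::((real^'n)\<times>real)\<times>('n\<Rightarrow>real). exp (-2*\<gamma>*(fst (fst x) $ j - snd x j)^2)) \<in> borel_measurable (borel \<Otimes>\<^sub>M M)"
        by measurable
    qed
  qed
  have hm: "h \<in> borel_measurable (P \<Otimes>\<^sub>M M)"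
    using hm0 measurable_cong_sets[OF sets_pair_measure_cong[OF sP refl[of "sets M"]] refl[of "sets borel"]] by metis
  have hprod: "h(a,w)*h(b,w) = (\<Prod>j\<in>S. exp(-2*\<gamma>*(fst a $ j - w j)^2) * exp(-2*\<gamma>*(fst b $ j - w j)^2))" for a b w
    unfolding h_def by (simp add: prod.distrib)
  have hi: "integrable M (\<lambda>w. h(a,w)*h(b,w))" for a b
  proof -
    have "integrable (PiM S (\<lambda>_. lborel)) (\<lambda>w. \<Prod>j\<in>S. (\<lambda>j t. exp(-2*\<gamma>*(fst a $ j - t)^2) * exp(-2*\<gamma>*(fst b $ j - t)^2)) j (w j))"
      by (rule ps.product_integrable_prod[OF fin]) (rule gauss1d(1)[OF g])
    then show ?thesis unfolding hprod M_def by simp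
  qed
  have hK: "(\<integral>w. h(a,w)*h(b,w) \<partial>M) = G^card S * gauss_kernel \<gamma> S (fst a) (fst b)" for a b
  proof -
    have "(\<integral>w. h(a,w)*h(b,w) \<partial>M) = (\<Prod>j\<in>S. exp (-\<gamma>*(fst a $ j - fst b $ j)^2) * G)"
    proof -
      have "(\<integral>w. (\<Prod>j\<in>S. (\<lambda>j t. exp(-2*\<gamma>*(fst a $ j - t)^2) * exp(-2*\<gamma>*(fst b $ j - t)^2)) j (w j)) \<partial>PiM S (\<lambda>_. lborel))
          = (\<Prod>j\<in>S. \<integral>t. (\<lambda>j t. exp(-2*\<gamma>*(fst a $ j - t)^2) * exp(-2*\<gamma>*(fst b $ j - t)^2)) j t \<partial>lborel)"
        by (rule ps.product_integral_prod[OF fin]) (rule gauss1d(1)[OF g])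
      also have "\<dots> = (\<Prod>j\<in>S. exp (-\<gamma>*(fst a $ j - fst b $ j)^2) * G)"
        unfolding G_def by (intro prod.cong refl) (rule gauss1d(2)[OF g])
      finally show ?thesis unfolding hprod M_def by simp
    qed
    also have "\<dots> = G^card S * gauss_kernel \<gamma> S (fst a) (fst b)"
    proof -
      have dl: "-\<gamma> * (\<Sum>j\<in>S. (fst a $ j - fst b $ j)^2) = (\<Sum>j\<in>S. -\<gamma> * (fst a $ j - fst b $ j)^2)"
        by (rule sum_distrib_left)
      then have "gauss_kernel \<gamma> S (fst a) (fst b) = (\<Prod>j\<in>S. exp (-\<gamma>*(fst a $ j - fst b $ j)^2))"
        unfolding gauss_kernel_def by (subst dl) (rule exp_sum[OF fin])
      then show ?thesis by (simp add: prod.distrib mult.commute)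
    qed
    finally show ?thesis .
  qed
  have "0 \<le> (\<integral>(a,b). snd a * snd b * (\<integral>w. h(a,w)*h(b,w) \<partial>M) \<partial>(P \<Otimes>\<^sub>M P))"
  proof (rule pos_kernel[OF P sfM _ hm, where C="G^card S"])
    show "integrable P snd" using Y by (simp add: case_prod_unfold)
    show "0 \<le> h (\<omega>, w)" for \<omega> w unfolding h_def by (simp add: prod_nonneg)
    show "h (\<omega>, w) \<le> 1" for \<omega> w unfolding h_def using g
      by (auto intro!: prod_le_1 simp: mult_nonneg_nonneg)
    show "integrable M (\<lambda>w. h (a, w) * h (b, w))" for a b by (rule hi)
    show "(\<integral>w. h(a,w)*h(b,w) \<partial>M) \<le> G^card S" for a b
      unfolding hK using gauss_kernel_le1[of \<gamma> S] g Gpos by (simp add: mult_left_le)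
  qed
  also have "\<dots> = G^card S * (\<integral>((x,y),(x',y')). y*y'*gauss_kernel \<gamma> S x x' \<partial>(P \<Otimes>\<^sub>M P))"
    unfolding hK integral_mult_right_zero[symmetric]
    by (intro Bochner_Integration.integral_cong) (auto simp: ac_simps)
  finally show ?thesis using zero_less_power[OF Gpos, of "card S"] by (auto simp: zero_le_mult_iff)
qed

lemma indep_irr:
  fixes P :: "((real^'n::finite) \<times> real) measure"
  assumes P: "prob_space P" and sP: "sets P = sets borel" and irr: "irrelevant_feature P i"
  shows "prob_space.indep_var P borel (\<lambda>\<omega>. (fst \<omega> $ i, 0::real^'n)) borel (\<lambda>\<omega>. (snd \<omega>, \<chi> j. if j = i then 0 else fst \<omega> $ j))"
proof -
  interpret prob_space P by fact
  define T where "T = (\<lambda>\<omega>::(real^'n)\<times>real. (fst \<omega> $ i, 0::real^'n))"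
  define Z where "Z = (\<lambda>\<omega>::(real^'n)\<times>real. (snd \<omega>, \<chi> j. if j = i then 0 else fst \<omega> $ j))"
  have Tm: "T \<in> measurable P borel"
    unfolding measurable_cong_sets[OF sP refl] T_def
    by (intro borel_measurable_continuous_onI continuous_intros)
  have Zm: "Z \<in> measurable P borel"
    unfolding measurable_cong_sets[OF sP refl] Z_def
    apply (intro borel_measurable_continuous_onI continuous_intros)
    subgoal for j by (cases "j = i") (auto intro!: continuous_intros)
    done
  have em: "(\<lambda>t::real. (t, 0::real^'n)) \<in> measurable borel borel"
    by (intro borel_measurable_continuous_onI continuous_intros)
  have TZm: "(\<lambda>\<omega>. (T \<omega>, Z \<omega>)) \<in> measurable P (borel \<Otimes>\<^sub>M borel)"
    by (rule measurable_Pair[OF Tm Zm])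
  have "distr P borel T \<Otimes>\<^sub>M distr P borel Z = distr P (borel \<Otimes>\<^sub>M borel) (\<lambda>\<omega>. (T \<omega>, Z \<omega>))"
  proof (rule pair_measure_eqI)
    show "sigma_finite_measure (distr P borel T)"
      using prob_space_distr[OF Tm] by (simp add: prob_space_imp_sigma_finite)
    show "sigma_finite_measure (distr P borel Z)"
      using prob_space_distr[OF Zm] by (simp add: prob_space_imp_sigma_finite)
    show "sets (distr P borel T \<Otimes>\<^sub>M distr P borel Z) = sets (distr P (borel \<Otimes>\<^sub>M borel) (\<lambda>\<omega>. (T \<omega>, Z \<omega>)))"
      by (simp add: sets_pair_measure_cong[OF sets_distr sets_distr])
    fix A B assume A: "A \<in> sets (distr P borel T)" and B: "B \<in> sets (distr P borel Z)"
    then have A': "A \<in> sets borel" and B': "B \<in> sets borel" by auto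
    define A0 where "A0 = (\<lambda>t::real. (t, 0::real^'n)) -` A"
    have A0: "A0 \<in> sets (borel :: real measure)"
      using measurable_sets[OF em A'] unfolding A0_def by simp
    have TA: "T \<omega> \<in> A \<longleftrightarrow> fst \<omega> $ i \<in> A0" for \<omega> unfolding T_def A0_def by simp
    have "emeasure (distr P (borel \<Otimes>\<^sub>M borel) (\<lambda>\<omega>. (T \<omega>, Z \<omega>))) (A \<times> B)
        = emeasure P {\<omega> \<in> space P. T \<omega> \<in> A \<and> Z \<omega> \<in> B}"
      using A' B' by (subst emeasure_distr[OF TZm]) (auto intro!: arg_cong[where f="emeasure P"])
    also have "\<dots> = ennreal (measure P {\<omega> \<in> space P. T \<omega> \<in> A} * measure P {\<omega> \<in> space P. Z \<omega> \<in> B})"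
      using irr A0 B' unfolding irrelevant_feature_def TA Z_def
      by (simp add: emeasure_eq_measure case_prod_unfold)
    also have "\<dots> = emeasure (distr P borel T) A * emeasure (distr P borel Z) B"
      using A' B' by (simp add: emeasure_distr[OF Tm] emeasure_distr[OF Zm] emeasure_eq_measure
          ennreal_mult'' Int_def conj_commute vimage_def)
    finally show "emeasure (distr P borel T) A * emeasure (distr P borel Z) B
       = emeasure (distr P (borel \<Otimes>\<^sub>M borel) (\<lambda>\<omega>. (T \<omega>, Z \<omega>))) (A \<times> B)" ..
  qed
  then have "indep_var borel T borel Z"
    using Tm Zm by (simp add: indep_var_distribution_eq)
  then show ?thesis unfolding T_def Z_def .
qed

theorem proposition2:
  fixes P :: "((real^'n::finite) \<times> real) measure"
    and \<gamma> :: real and S :: "'n set" and i :: 'n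
  assumes "prob_space P"
    and "sets P = sets borel"
    and "integrable P (\<lambda>(x, y). y)"
    and "\<gamma> > 0"
    and "i \<notin> S"
    and "irrelevant_feature P i"
  shows "(\<integral>((x, y), (x', y')). y * y' * gauss_kernel \<gamma> (S \<union> {i}) x x' \<partial>(P \<Otimes>\<^sub>M P))
       \<le> (\<integral>((x, y), (x', y')). y * y' * gauss_kernel \<gamma> S x x' \<partial>(P \<Otimes>\<^sub>M P))"
proof -
  interpret prob_space P by fact
  interpret PP: pair_sigma_finite P P by (simp add: pair_sigma_finite_def sigma_finite_measure_axioms)
  have sP: "sets P = sets borel" by fact
  define T where "T = (\<lambda>\<omega>::(real^'n)\<times>real. (fst \<omega> $ i, 0::real^'n))"
  define Z where "Z = (\<lambda>\<omega>::(real^'n)\<times>real. (snd \<omega>, \<chi> j. if j = i then 0 else fst \<omega> $ j))"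
  define F where "F = (\<lambda>(z::real \<times> (real^'n)) (z'::real \<times> (real^'n)). fst z * fst z' * gauss_kernel \<gamma> S (snd z) (snd z'))"
  define g where "g = (\<lambda>(z::real \<times> (real^'n)) (z'::real \<times> (real^'n)). exp (-\<gamma> * (fst z - fst z')^2))"
  have Yint: "integrable P snd" using assms(3) by (simp add: case_prod_unfold)
  have ind: "indep_var borel T borel Z" using indep_irr[OF assms(1,2,6)] unfolding T_def Z_def .
  have Tm: "T \<in> measurable P borel"
    unfolding measurable_cong_sets[OF sP refl] T_def
    by (intro borel_measurable_continuous_onI continuous_intros)
  have Zm: "Z \<in> measurable P borel"
    unfolding measurable_cong_sets[OF sP refl] Z_def
    apply (intro borel_measurable_continuous_onI continuous_intros)
    subgoal for j by (cases "j = i") (auto intro!: continuous_intros)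
    done
  have Fm: "(\<lambda>(z,z'). F z z') \<in> borel_measurable borel"
    unfolding F_def gauss_kernel_def case_prod_unfold
    by (intro borel_measurable_continuous_onI continuous_intros)
  have gm: "(\<lambda>(z,z'). g z z') \<in> borel_measurable borel"
    unfolding g_def case_prod_unfold
    by (intro borel_measurable_continuous_onI continuous_intros)
  have Fzm: "F z \<in> borel_measurable borel" for z
    unfolding F_def gauss_kernel_def case_prod_unfold
    by (intro borel_measurable_continuous_onI continuous_intros)
  have gzm: "g z \<in> borel_measurable borel" for z
    unfolding g_def case_prod_unfold
    by (intro borel_measurable_continuous_onI continuous_intros)
  have k01: "0 \<le> gauss_kernel \<gamma> S x x'" "gauss_kernel \<gamma> S x x' \<le> 1" for x x'
    using gauss_kernel_le1[of \<gamma> S x x'] assms(4) by auto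
  have Fb: "\<bar>F z z'\<bar> \<le> \<bar>fst z\<bar> * \<bar>fst z'\<bar>" for z z'
    unfolding F_def using k01[of "snd z" "snd z'"]
    by (auto simp: abs_mult intro!: mult_left_le)
  have g01: "0 \<le> g z z'" "g z z' \<le> 1" for z z'
    unfolding g_def using assms(4) by auto
  have kS: "gauss_kernel \<gamma> S x x' = gauss_kernel \<gamma> S (snd (Z (x,y))) (snd (Z (x',y')))" for x y x' y'
    unfolding gauss_kernel_def Z_def using assms(5) by (auto intro!: arg_cong[where f=exp] sum.cong)
  have kSi: "gauss_kernel \<gamma> (S \<union> {i}) x x' = gauss_kernel \<gamma> S x x' * exp (-\<gamma> * (x$i - x'$i)^2)" for x x'
    unfolding gauss_kernel_def using assms(5)
    by (simp add: exp_add[symmetric] algebra_simps)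
  have hL: "y * y' * gauss_kernel \<gamma> (S \<union> {i}) x x' = F (Z (x,y)) (Z (x',y')) * g (T (x,y)) (T (x',y'))" for x y x' y'
    unfolding kSi F_def g_def by (subst kS[of x x' y y']) (simp add: Z_def T_def)
  have hR: "y * y' * gauss_kernel \<gamma> S x x' = F (Z (x,y)) (Z (x',y'))" for x y x' y'
    unfolding F_def by (subst kS[of x x' y y']) (simp add: Z_def)
  have ZZm: "(\<lambda>q. (Z (fst q), Z (snd q))) \<in> measurable (P \<Otimes>\<^sub>M P) borel"
    unfolding borel_prod[where 'a="real \<times> (real^'n)" and 'b="real \<times> (real^'n)", symmetric]
    by (intro measurable_Pair measurable_compose[OF measurable_fst Zm] measurable_compose[OF measurable_snd Zm])
  have TTm: "(\<lambda>q. (T (fst q), T (snd q))) \<in> measurable (P \<Otimes>\<^sub>M P) borel"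
    unfolding borel_prod[where 'a="real \<times> (real^'n)" and 'b="real \<times> (real^'n)", symmetric]
    by (intro measurable_Pair measurable_compose[OF measurable_fst Tm] measurable_compose[OF measurable_snd Tm])
  have FZm: "(\<lambda>q. F (Z (fst q)) (Z (snd q))) \<in> borel_measurable (P \<Otimes>\<^sub>M P)"
    using measurable_compose[OF ZZm Fm] by simp
  have gTm: "(\<lambda>q. g (T (fst q)) (T (snd q))) \<in> borel_measurable (P \<Otimes>\<^sub>M P)"
    using measurable_compose[OF TTm gm] by simp
  have YY: "integrable (P \<Otimes>\<^sub>M P) (\<lambda>(a,b). snd a * snd b)"
    by (rule pair_mult(1)[OF _ _ Yint Yint]) (simp_all add: sigma_finite_measure_axioms)
  have YYb: "integrable (P \<Otimes>\<^sub>M P) (\<lambda>q. \<bar>snd (fst q) * snd (snd q)\<bar>)"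
    using integrable_abs[OF YY] by (simp add: case_prod_unfold)
  have IFZ: "integrable (P \<Otimes>\<^sub>M P) (\<lambda>q. F (Z (fst q)) (Z (snd q)))"
  proof (rule Bochner_Integration.integrable_bound[OF YYb FZm])
    show "AE q in P \<Otimes>\<^sub>M P. norm (F (Z (fst q)) (Z (snd q))) \<le> norm \<bar>snd (fst q) * snd (snd q)\<bar>"
      using Fb by (auto simp: Z_def abs_mult)
  qed
  have IL: "integrable (P \<Otimes>\<^sub>M P) (\<lambda>q. F (Z (fst q)) (Z (snd q)) * g (T (fst q)) (T (snd q)))"
  proof (rule Bochner_Integration.integrable_bound[OF YYb])
    show "(\<lambda>q. F (Z (fst q)) (Z (snd q)) * g (T (fst q)) (T (snd q))) \<in> borel_measurable (P \<Otimes>\<^sub>M P)"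
      using FZm gTm by measurable
    show "AE q in P \<Otimes>\<^sub>M P. norm (F (Z (fst q)) (Z (snd q)) * g (T (fst q)) (T (snd q))) \<le> norm \<bar>snd (fst q) * snd (snd q)\<bar>"
    proof (rule AE_I2)
      fix q
      have "\<bar>F (Z (fst q)) (Z (snd q)) * g (T (fst q)) (T (snd q))\<bar> \<le> \<bar>F (Z (fst q)) (Z (snd q))\<bar> * 1"
        unfolding abs_mult using g01 by (intro mult_left_mono) auto
      also have "\<dots> \<le> \<bar>snd (fst q) * snd (snd q)\<bar>" using Fb[of "Z (fst q)" "Z (snd q)"] by (simp add: Z_def abs_mult)
      finally show "norm (F (Z (fst q)) (Z (snd q)) * g (T (fst q)) (T (snd q))) \<le> norm \<bar>snd (fst q) * snd (snd q)\<bar>"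
        by simp
    qed
  qed
  define \<alpha> where "\<alpha> = (\<lambda>z. \<integral>\<omega>'. F z (Z \<omega>') \<partial>P)"
  define \<beta> where "\<beta> = (\<lambda>t. \<integral>\<omega>'. g t (T \<omega>') \<partial>P)"
  have iF: "integrable P (\<lambda>\<omega>'. F z (Z \<omega>'))" for z
  proof (rule Bochner_Integration.integrable_bound)
    show "integrable P (\<lambda>\<omega>'. \<bar>fst z\<bar> * \<bar>snd \<omega>'\<bar>)"
      using Yint by (intro integrable_mult_right integrable_abs)
    show "(\<lambda>\<omega>'. F z (Z \<omega>')) \<in> borel_measurable P" using measurable_compose[OF Zm Fzm] by simp
    show "AE \<omega>' in P. norm (F z (Z \<omega>')) \<le> norm (\<bar>fst z\<bar> * \<bar>snd \<omega>'\<bar>)"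
    proof (rule AE_I2)
      fix \<omega>' show "norm (F z (Z \<omega>')) \<le> norm (\<bar>fst z\<bar> * \<bar>snd \<omega>'\<bar>)"
        using Fb[of z "Z \<omega>'"] by (simp add: Z_def)
    qed
  qed
  have igm: "(\<lambda>\<omega>'. g t (T \<omega>')) \<in> borel_measurable P" for t
    using measurable_compose[OF Tm gzm] by simp
  have ig: "integrable P (\<lambda>\<omega>'. g t (T \<omega>'))" for t
    by (rule integrable_const_bound[where B=1]) (use g01 igm in auto)
  have \<beta>01: "0 \<le> \<beta> t" "\<beta> t \<le> 1" for t
  proof -
    show "0 \<le> \<beta> t" unfolding \<beta>_def by (rule integral_nonneg_AE) (simp add: g01)
    have "\<beta> t \<le> (\<integral>\<omega>'. 1 \<partial>P)" unfolding \<beta>_def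
      by (rule integral_mono[OF ig]) (auto simp: g01)
    then show "\<beta> t \<le> 1" by (simp add: prob_space)
  qed
  have Fcm: "(\<lambda>(z, \<omega>'). F z (Z \<omega>')) \<in> borel_measurable (borel \<Otimes>\<^sub>M P)"
  proof -
    have "(\<lambda>p::(real \<times> (real^'n)) \<times> ((real^'n) \<times> real). (fst p, Z (snd p))) \<in> measurable (borel \<Otimes>\<^sub>M P) borel"
      unfolding borel_prod[where 'a="real \<times> (real^'n)" and 'b="real \<times> (real^'n)", symmetric]
      by (intro measurable_Pair measurable_fst measurable_compose[OF measurable_snd Zm])
    from measurable_compose[OF this Fm] show ?thesis by (simp add: case_prod_unfold)
  qed
  have gcm: "(\<lambda>(t, \<omega>'). g t (T \<omega>')) \<in> borel_measurable (borel \<Otimes>\<^sub>M P)"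
  proof -
    have "(\<lambda>p::(real \<times> (real^'n)) \<times> ((real^'n) \<times> real). (fst p, T (snd p))) \<in> measurable (borel \<Otimes>\<^sub>M P) borel"
      unfolding borel_prod[where 'a="real \<times> (real^'n)" and 'b="real \<times> (real^'n)", symmetric]
      by (intro measurable_Pair measurable_fst measurable_compose[OF measurable_snd Tm])
    from measurable_compose[OF this gm] show ?thesis by (simp add: case_prod_unfold)
  qed
  have \<alpha>m: "\<alpha> \<in> borel_measurable borel"
    unfolding \<alpha>_def using borel_measurable_lebesgue_integral[of "\<lambda>z \<omega>'. F z (Z \<omega>')" borel] Fcm by simp
  have \<beta>m: "\<beta> \<in> borel_measurable borel"
    unfolding \<beta>_def using borel_measurable_lebesgue_integral[of "\<lambda>t \<omega>'. g t (T \<omega>')" borel] gcm by simp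
  have \<alpha>b: "\<bar>\<alpha> z\<bar> \<le> \<bar>fst z\<bar> * (\<integral>\<omega>'. \<bar>snd \<omega>'\<bar> \<partial>P)" for z
  proof -
    have "\<bar>\<alpha> z\<bar> \<le> (\<integral>\<omega>'. norm (F z (Z \<omega>')) \<partial>P)"
      unfolding \<alpha>_def using integral_norm_bound[of P "\<lambda>\<omega>'. F z (Z \<omega>')"] by simp
    also have "\<dots> \<le> (\<integral>\<omega>'. \<bar>fst z\<bar> * \<bar>snd \<omega>'\<bar> \<partial>P)"
      using Fb[of z] by (intro integral_mono integrable_norm iF integrable_mult_right integrable_abs Yint)
         (auto simp: Z_def)
    finally show ?thesis by simp
  qed
  have i\<alpha>: "integrable P (\<lambda>\<omega>. \<alpha> (Z \<omega>))"
  proof (rule Bochner_Integration.integrable_bound)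
    show "integrable P (\<lambda>\<omega>. (\<integral>\<omega>'. \<bar>snd \<omega>'\<bar> \<partial>P) * \<bar>snd \<omega>\<bar>)"
      using Yint by (intro integrable_mult_right integrable_abs)
    show "(\<lambda>\<omega>. \<alpha> (Z \<omega>)) \<in> borel_measurable P" using measurable_compose[OF Zm \<alpha>m] by simp
    show "AE \<omega> in P. norm (\<alpha> (Z \<omega>)) \<le> norm ((\<integral>\<omega>'. \<bar>snd \<omega>'\<bar> \<partial>P) * \<bar>snd \<omega>\<bar>)"
      using \<alpha>b by (auto simp: Z_def mult.commute)
  qed
  have \<beta>Tm: "(\<lambda>\<omega>. \<beta> (T \<omega>)) \<in> borel_measurable P" using measurable_compose[OF Tm \<beta>m] by simp
  have i\<beta>: "integrable P (\<lambda>\<omega>. \<beta> (T \<omega>))"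
    by (rule integrable_const_bound[where B=1]) (use \<beta>01 \<beta>Tm in auto)
  define c where "c = (\<integral>\<omega>. \<beta> (T \<omega>) \<partial>P)"
  have c01: "0 \<le> c" "c \<le> 1"
  proof -
    show "0 \<le> c" unfolding c_def by (rule integral_nonneg_AE) (simp add: \<beta>01)
    have "c \<le> (\<integral>\<omega>'. 1 \<partial>P)" unfolding c_def
      by (rule integral_mono[OF i\<beta>]) (auto simp: \<beta>01)
    then show "c \<le> 1" by (simp add: prob_space)
  qed
  have inner: "(\<integral>\<omega>'. F (Z \<omega>) (Z \<omega>') * g (T \<omega>) (T \<omega>') \<partial>P) = \<alpha> (Z \<omega>) * \<beta> (T \<omega>)" for \<omega>
  proof -
    have "indep_var borel (g (T \<omega>) \<circ> T) borel (F (Z \<omega>) \<circ> Z)"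
      by (rule indep_var_compose[OF ind gzm Fzm])
    then have "(\<integral>\<omega>'. g (T \<omega>) (T \<omega>') * F (Z \<omega>) (Z \<omega>') \<partial>P)
        = (\<integral>\<omega>'. g (T \<omega>) (T \<omega>') \<partial>P) * (\<integral>\<omega>'. F (Z \<omega>) (Z \<omega>') \<partial>P)"
      using indep_var_lebesgue_integral[of "\<lambda>\<omega>'. g (T \<omega>) (T \<omega>')" "\<lambda>\<omega>'. F (Z \<omega>) (Z \<omega>')"] ig iF
      by (simp add: comp_def)
    then show ?thesis unfolding \<alpha>_def \<beta>_def by (simp add: mult.commute)
  qed
  have outer: "(\<integral>\<omega>. \<alpha> (Z \<omega>) * \<beta> (T \<omega>) \<partial>P) = (\<integral>\<omega>. \<alpha> (Z \<omega>) \<partial>P) * c"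
  proof -
    have "indep_var borel (\<beta> \<circ> T) borel (\<alpha> \<circ> Z)"
      by (rule indep_var_compose[OF ind \<beta>m \<alpha>m])
    then have "(\<integral>\<omega>. \<beta> (T \<omega>) * \<alpha> (Z \<omega>) \<partial>P) = (\<integral>\<omega>. \<beta> (T \<omega>) \<partial>P) * (\<integral>\<omega>. \<alpha> (Z \<omega>) \<partial>P)"
      using indep_var_lebesgue_integral[of "\<lambda>\<omega>. \<beta> (T \<omega>)" "\<lambda>\<omega>. \<alpha> (Z \<omega>)"] i\<alpha> i\<beta>
      by (simp add: comp_def)
    then show ?thesis unfolding c_def by (simp add: mult.commute)
  qed
  have L: "(\<integral>((x, y), (x', y')). y * y' * gauss_kernel \<gamma> (S \<union> {i}) x x' \<partial>(P \<Otimes>\<^sub>M P))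
      = (\<integral>q. F (Z (fst q)) (Z (snd q)) * g (T (fst q)) (T (snd q)) \<partial>(P \<Otimes>\<^sub>M P))"
    by (intro Bochner_Integration.integral_cong refl) (auto simp: hL hL[unfolded Un_insert_right Un_empty_right] split: prod.splits)
  also have "\<dots> = (\<integral>\<omega>. (\<integral>\<omega>'. F (Z \<omega>) (Z \<omega>') * g (T \<omega>) (T \<omega>') \<partial>P) \<partial>P)"
    using PP.integral_fst'[OF IL] by simp
  also have "\<dots> = (\<integral>\<omega>. \<alpha> (Z \<omega>) * \<beta> (T \<omega>) \<partial>P)" by (simp add: inner)
  also have "\<dots> = (\<integral>\<omega>. \<alpha> (Z \<omega>) \<partial>P) * c" by (rule outer)
  finally have Leq: "(\<integral>((x, y), (x', y')). y * y' * gauss_kernel \<gamma> (S \<union> {i}) x x' \<partial>(P \<Otimes>\<^sub>M P))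
      = (\<integral>\<omega>. \<alpha> (Z \<omega>) \<partial>P) * c" .
  have "(\<integral>((x, y), (x', y')). y * y' * gauss_kernel \<gamma> S x x' \<partial>(P \<Otimes>\<^sub>M P))
      = (\<integral>q. F (Z (fst q)) (Z (snd q)) \<partial>(P \<Otimes>\<^sub>M P))"
    by (intro Bochner_Integration.integral_cong refl) (auto simp: hR split: prod.splits)
  also have "\<dots> = (\<integral>\<omega>. \<alpha> (Z \<omega>) \<partial>P)"
    using PP.integral_fst'[OF IFZ] by (simp add: \<alpha>_def)
  finally have Req: "(\<integral>((x, y), (x', y')). y * y' * gauss_kernel \<gamma> S x x' \<partial>(P \<Otimes>\<^sub>M P))
      = (\<integral>\<omega>. \<alpha> (Z \<omega>) \<partial>P)" .
  have R0: "0 \<le> (\<integral>((x, y), (x', y')). y * y' * gauss_kernel \<gamma> S x x' \<partial>(P \<Otimes>\<^sub>M P))"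
    by (rule A_nonneg[OF assms(1,2,3,4)])
  show ?thesis unfolding Leq Req using R0 c01 unfolding Req by (simp add: mult_left_le)
qed

end
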